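(* There is a function $F:\mathbb{N}\to\mathbb{R}_{\ge0}$ such that the following holds. Let $G=(V,E,c_V^G,c_E^G)$ and $H=(V,E,c_V^H,c_E^H)$ be two capacitated graphs on the same $n$-vertex graph $(V,E)$ such that every vertex capacity and every edge capacity of $G$ differs from the corresponding capacity of $H$ by at most $\xi$. Let $\mu_G,\mu_H$ be the fractional matchings returned by Rising-Tide on $G$ and $H$. Then for every edge $e\in E$, $|\mu_G(e)-\mu_H(e)|\le F(n)\xi$.
   Context: Capacitated graphs have nonnegative vertex capacities $c_V$ and edge capacities $c_E$; edges may include self-loops, and in $\sum_j\mu(i,j)$ a self-loop at $i$ counts once. A feasible fractional matching $\mu:E\to\mathbb{R}_{\ge0}$ satisfies $\mu(e)\le c_E(e)$ and $\sum_j\mu(i,j)\le c_V(i)$. Vertex $i$ is saturated if $\sum_j\mu(i,j)=c_V(i)$; edge $e$ is saturated if $\mu(e)=c_E(e)$. Rising-Tide: set $E'=\{e\in E:c_E(e)>0\}$ and $\mu\equiv0$; while $E'\ne\emptyset$: choose the maximum $\delta\ge0$ such that $\mu+\delta\mathbf{1}_{E'}$ is feasible, set $\mu\gets\mu+\delta\mathbf{1}_{E'}$, and remove from $E'$ every edge $(i,j)$ such that $i$, $j$, or $(i,j)$ is saturated; return $\mu$. *)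

theory Defs
  imports Complex_Main "HOL-Library.While_Combinator"
begin

text \<open>A capacitated graph on vertex set V (vertices are natural numbers) with edge set E.
  Edges are unordered pairs {i,j} (i = j gives a self-loop {i}).\<close>

definition graph :: "nat set \<Rightarrow> nat set set \<Rightarrow> bool" where
  "graph V E \<longleftrightarrow> finite V \<and> (\<forall>e\<in>E. \<exists>i\<in>V. \<exists>j\<in>V. e = {i, j})"

text \<open>Load of vertex i: sum over edges incident to i; a self-loop {i} counts once.\<close>
definition load :: "nat set set \<Rightarrow> (nat set \<Rightarrow> real) \<Rightarrow> nat \<Rightarrow> real" where
  "load E \<mu> i = (\<Sum>e\<in>{e\<in>E. i \<in> e}. \<mu> e)"

definition feasible ::
  "nat set \<Rightarrow> nat set set \<Rightarrow> (nat \<Rightarrow> real) \<Rightarrow> (nat set \<Rightarrow> real) \<Rightarrow> (nat set \<Rightarrow> real) \<Rightarrow> bool" where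
  "feasible V E cV cE \<mu> \<longleftrightarrow>
     (\<forall>e\<in>E. 0 \<le> \<mu> e \<and> \<mu> e \<le> cE e) \<and> (\<forall>i\<in>V. load E \<mu> i \<le> cV i)"

definition vertex_saturated :: "nat set set \<Rightarrow> (nat \<Rightarrow> real) \<Rightarrow> (nat set \<Rightarrow> real) \<Rightarrow> nat \<Rightarrow> bool" where
  "vertex_saturated E cV \<mu> i \<longleftrightarrow> load E \<mu> i = cV i"

definition edge_saturated :: "(nat set \<Rightarrow> real) \<Rightarrow> (nat set \<Rightarrow> real) \<Rightarrow> nat set \<Rightarrow> bool" where
  "edge_saturated cE \<mu> e \<longleftrightarrow> \<mu> e = cE e"

definition rt_step ::
  "nat set \<Rightarrow> nat set set \<Rightarrow> (nat \<Rightarrow> real) \<Rightarrow> (nat set \<Rightarrow> real)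
   \<Rightarrow> nat set set \<times> (nat set \<Rightarrow> real) \<Rightarrow> nat set set \<times> (nat set \<Rightarrow> real)" where
  "rt_step V E cV cE st =
     (let E' = fst st; \<mu> = snd st;
          \<delta> = (GREATEST d::real. 0 \<le> d \<and>
                  feasible V E cV cE (\<lambda>e. \<mu> e + (if e \<in> E' then d else 0)));
          \<mu>' = (\<lambda>e. \<mu> e + (if e \<in> E' then \<delta> else 0))
      in ({e \<in> E'. \<not> (\<exists>i\<in>e. vertex_saturated E cV \<mu>' i) \<and> \<not> edge_saturated cE \<mu>' e}, \<mu>'))"

definition rising_tide ::
  "nat set \<Rightarrow> nat set set \<Rightarrow> (nat \<Rightarrow> real) \<Rightarrow> (nat set \<Rightarrow> real) \<Rightarrow> (nat set \<Rightarrow> real)" where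
  "rising_tide V E cV cE =
     snd (while (\<lambda>st. fst st \<noteq> {}) (rt_step V E cV cE) ({e \<in> E. 0 < cE e}, (\<lambda>_. 0)))"

end

theory Submission
  imports Defs
begin

definition rt_inv :: "nat set \<Rightarrow> nat set set \<Rightarrow> (nat \<Rightarrow> real) \<Rightarrow> (nat set \<Rightarrow> real)
   \<Rightarrow> nat set set \<times> (nat set \<Rightarrow> real) \<Rightarrow> bool" where
  "rt_inv V E cV cE st \<longleftrightarrow> fst st \<subseteq> E \<and> feasible V E cV cE (snd st) \<and>
     (\<exists>L\<ge>0. (\<forall>e\<in>fst st. snd st e = L) \<and> (\<forall>e\<in>E. snd st e \<le> L)) \<and>
     (\<forall>e\<in>E - fst st. snd st e = cE e \<or>
        (\<exists>i\<in>e. load E (snd st) i = cV i \<and> (\<forall>f\<in>E. i \<in> f \<longrightarrow> snd st f \<le> snd st e)))"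

lemma load_add:
  assumes "finite E" "E' \<subseteq> E"
  shows "load E (\<lambda>e. \<mu> e + (if e \<in> E' then d else 0)) i = load E \<mu> i + d * card {f\<in>E'. i \<in> f}"
proof -
  have fin: "finite {e\<in>E. i \<in> e}" using assms by auto
  have "(\<Sum>e\<in>{e\<in>E. i \<in> e}. (if e \<in> E' then d else 0)) = (\<Sum>e\<in>{x\<in>{e\<in>E. i \<in> e}. x \<in> E'}. d)"
    using sum.inter_filter[OF fin, of "\<lambda>_. d" "\<lambda>x. x \<in> E'"] by simp
  also have "{x\<in>{e\<in>E. i \<in> e}. x \<in> E'} = {f\<in>E'. i \<in> f}" using assms by auto
  finally show ?thesis unfolding load_def by (simp add: sum.distrib mult.commute)
qed

lemma step_lemma:
  assumes fin: "finite V" and EV: "\<forall>e\<in>E. e \<subseteq> V" and finE: "finite E"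
    and inv: "rt_inv V E cV cE st" and ne: "fst st \<noteq> {}"
  shows "rt_inv V E cV cE (rt_step V E cV cE st) \<and> fst (rt_step V E cV cE st) \<subset> fst st"
proof -
  obtain E' \<mu> where st: "st = (E', \<mu>)" by (cases st)
  have E'E: "E' \<subseteq> E" and feas: "feasible V E cV cE \<mu>" using inv st by (auto simp: rt_inv_def)
  obtain L where L0: "L \<ge> 0" and LE': "\<forall>e\<in>E'. \<mu> e = L" and LE: "\<forall>e\<in>E. \<mu> e \<le> L"
    using inv st by (auto simp: rt_inv_def)
  have old: "\<forall>e\<in>E - E'. \<mu> e = cE e \<or>
        (\<exists>i\<in>e. load E \<mu> i = cV i \<and> (\<forall>f\<in>E. i \<in> f \<longrightarrow> \<mu> f \<le> \<mu> e))"
    using inv st by (auto simp: rt_inv_def)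
  have neE': "E' \<noteq> {}" using ne st by simp
  have finE': "finite E'" using E'E finE finite_subset by blast
  define k where "k i = card {f\<in>E'. i \<in> f}" for i
  define md where "md d = (\<lambda>e. \<mu> e + (if e \<in> E' then d else (0::real)))" for d
  have ld: "load E (md d) i = load E \<mu> i + d * k i" for d i
    unfolding md_def k_def by (rule load_add[OF finE E'E])
  define D where "D = (\<lambda>e. cE e - \<mu> e) ` E' \<union> (\<lambda>i. (cV i - load E \<mu> i) / k i) ` {i\<in>V. k i > 0}"
  define ds where "ds = Min D"
  have finD: "finite D" unfolding D_def using finE' fin by auto
  have neD: "D \<noteq> {}" unfolding D_def using neE' by auto
  have feasE: "\<forall>e\<in>E. 0 \<le> \<mu> e \<and> \<mu> e \<le> cE e" and feasV: "\<forall>i\<in>V. load E \<mu> i \<le> cV i"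
    using feas by (auto simp: feasible_def)
  have D0: "\<forall>x\<in>D. 0 \<le> x" unfolding D_def using feasE feasV E'E by auto
  have ds0: "0 \<le> ds" unfolding ds_def using D0 finD neD by simp
  have iff: "feasible V E cV cE (md d) \<longleftrightarrow> d \<le> ds" if d0: "0 \<le> d" for d
  proof
    assume f: "feasible V E cV cE (md d)"
    have "\<forall>x\<in>D. d \<le> x"
    proof
      fix x assume "x \<in> D"
      then consider (a) e where "e \<in> E'" "x = cE e - \<mu> e"
        | (b) i where "i \<in> V" "k i > 0" "x = (cV i - load E \<mu> i) / k i" unfolding D_def by auto
      then show "d \<le> x"
      proof cases
        case a then show ?thesis using f E'E unfolding feasible_def md_def by force
      next
        case b
        have "load E \<mu> i + d * k i \<le> cV i" using f b ld unfolding feasible_def by metis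
        then show ?thesis using b by (simp add: pos_le_divide_eq)
      qed
    qed
    then show "d \<le> ds" unfolding ds_def using finD neD by simp
  next
    assume dds: "d \<le> ds"
    have dx: "\<forall>x\<in>D. d \<le> x" using dds finD neD unfolding ds_def by simp
    have "\<forall>e\<in>E. 0 \<le> md d e \<and> md d e \<le> cE e"
    proof
      fix e assume e: "e \<in> E"
      show "0 \<le> md d e \<and> md d e \<le> cE e"
      proof (cases "e \<in> E'")
        case True
        then have "d \<le> cE e - \<mu> e" using dx unfolding D_def by auto
        then show ?thesis using True feasE e d0 unfolding md_def by auto
      qed (use feasE e in \<open>auto simp: md_def\<close>)
    qed
    moreover have "\<forall>i\<in>V. load E (md d) i \<le> cV i"
    proof
      fix i assume i: "i \<in> V"
      show "load E (md d) i \<le> cV i"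
      proof (cases "k i > 0")
        case True
        then have "d \<le> (cV i - load E \<mu> i) / k i" using dx i unfolding D_def by auto
        then show ?thesis using True ld by (simp add: pos_le_divide_eq)
      qed (use feasV i ld in auto)
    qed
    ultimately show "feasible V E cV cE (md d)" unfolding feasible_def by auto
  qed
  have gr: "(GREATEST d::real. 0 \<le> d \<and> feasible V E cV cE (md d)) = ds"
    by (rule Greatest_equality) (use iff ds0 in auto)
  have gr': "(GREATEST d::real. 0 \<le> d \<and> feasible V E cV cE (\<lambda>e. \<mu> e + (if e \<in> E' then d else 0))) = ds"
    using gr unfolding md_def .
  define \<mu>' where "\<mu>' = md ds"
  define E'' where "E'' = {e \<in> E'. \<not> (\<exists>i\<in>e. vertex_saturated E cV \<mu>' i) \<and> \<not> edge_saturated cE \<mu>' e}"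
  have rs: "rt_step V E cV cE st = (E'', \<mu>')"
    unfolding rt_step_def st Let_def fst_conv snd_conv gr' E''_def \<mu>'_def md_def by simp
  have feas': "feasible V E cV cE \<mu>'" unfolding \<mu>'_def using iff ds0 by simp
  have ldv: "load E \<mu>' i = load E \<mu> i + ds * k i" for i unfolding \<mu>'_def by (rule ld)
  have \<mu>'E': "\<forall>e\<in>E'. \<mu>' e = L + ds" using LE' unfolding \<mu>'_def md_def by auto
  have \<mu>'E: "\<forall>e\<in>E. \<mu>' e \<le> L + ds" using LE ds0 unfolding \<mu>'_def md_def by auto
  have I4: "\<forall>e\<in>E - E''. \<mu>' e = cE e \<or>
        (\<exists>i\<in>e. load E \<mu>' i = cV i \<and> (\<forall>f\<in>E. i \<in> f \<longrightarrow> \<mu>' f \<le> \<mu>' e))"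
  proof
    fix e assume e: "e \<in> E - E''"
    show "\<mu>' e = cE e \<or> (\<exists>i\<in>e. load E \<mu>' i = cV i \<and> (\<forall>f\<in>E. i \<in> f \<longrightarrow> \<mu>' f \<le> \<mu>' e))"
    proof (cases "e \<in> E'")
      case True
      then have "(\<exists>i\<in>e. vertex_saturated E cV \<mu>' i) \<or> edge_saturated cE \<mu>' e"
        using e unfolding E''_def by auto
      then show ?thesis
      proof
        assume "\<exists>i\<in>e. vertex_saturated E cV \<mu>' i"
        then obtain i where "i \<in> e" "load E \<mu>' i = cV i" unfolding vertex_saturated_def by auto
        moreover have "\<forall>f\<in>E. i \<in> f \<longrightarrow> \<mu>' f \<le> \<mu>' e" using \<mu>'E \<mu>'E' True by auto
        ultimately show ?thesis by blast
      qed (simp add: edge_saturated_def)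
    next
      case False
      then have eE: "e \<in> E - E'" using e by auto
      have same: "\<mu>' e = \<mu> e" using False unfolding \<mu>'_def md_def by simp
      from old eE consider (a) "\<mu> e = cE e"
        | (b) i where "i \<in> e" "load E \<mu> i = cV i" "\<forall>f\<in>E. i \<in> f \<longrightarrow> \<mu> f \<le> \<mu> e" by blast
      then show ?thesis
      proof cases
        case a then show ?thesis using same by simp
      next
        case b
        have iV: "i \<in> V" using b eE EV by auto
        have "load E \<mu>' i \<le> cV i" using feas' iV unfolding feasible_def by auto
        then have "ds * k i \<le> 0" using ldv b by simp
        then have "ds = 0 \<or> k i = 0" using ds0 by (auto simp add: mult_le_0_iff)
        then show ?thesis
        proof
          assume "ds = 0"
          then have "\<mu>' = \<mu>" unfolding \<mu>'_def md_def by (simp add: fun_eq_iff)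
          then show ?thesis using b by blast
        next
          assume k0: "k i = 0"
          have "finite {f\<in>E'. i \<in> f}" using finE' by simp
          then have emp: "{f\<in>E'. i \<in> f} = {}" using k0 unfolding k_def by simp
          have "\<forall>f\<in>E. i \<in> f \<longrightarrow> \<mu>' f = \<mu> f" using emp unfolding \<mu>'_def md_def by auto
          moreover have "load E \<mu>' i = cV i" using ldv k0 b by simp
          ultimately show ?thesis using b same by auto
        qed
      qed
    qed
  qed
  have dsD: "ds \<in> D" unfolding ds_def using finD neD by simp
  have sub: "E'' \<subset> E'"
  proof -
    have "E'' \<subseteq> E'" unfolding E''_def by auto
    moreover have "\<exists>e\<in>E'. e \<notin> E''"
    proof -
      from dsD consider (a) e where "e \<in> E'" "ds = cE e - \<mu> e"
        | (b) i where "i \<in> V" "k i > 0" "ds = (cV i - load E \<mu> i) / k i" unfolding D_def by auto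
      then show ?thesis
      proof cases
        case a
        then have "edge_saturated cE \<mu>' e" unfolding edge_saturated_def \<mu>'_def md_def by simp
        then show ?thesis using a unfolding E''_def by auto
      next
        case b
        then have "card {f\<in>E'. i \<in> f} \<noteq> 0" unfolding k_def by simp
        then obtain f where f: "f \<in> E'" "i \<in> f" by (metis (no_types, lifting) card.empty empty_Collect_eq)
        have "load E \<mu>' i = cV i" using ldv b by simp
        then have "f \<notin> E''" using f unfolding E''_def vertex_saturated_def by auto
        then show ?thesis using f by auto
      qed
    qed
    ultimately show ?thesis by auto
  qed
  have "rt_inv V E cV cE (E'', \<mu>')"
    unfolding rt_inv_def using sub E'E feas' \<mu>'E' \<mu>'E I4 L0 ds0
    by (auto intro!: exI[of _ "L + ds"])
  then show ?thesis using rs sub st by simp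
qed

lemma rt_props:
  assumes g: "graph V E" and cV0: "\<forall>i\<in>V. 0 \<le> cV i" and cE0: "\<forall>e\<in>E. 0 \<le> cE e"
  shows "feasible V E cV cE (rising_tide V E cV cE) \<and>
    (\<forall>e\<in>E. rising_tide V E cV cE e = cE e \<or>
        (\<exists>i\<in>e. load E (rising_tide V E cV cE) i = cV i \<and>
           (\<forall>f\<in>E. i \<in> f \<longrightarrow> rising_tide V E cV cE f \<le> rising_tide V E cV cE e)))"
proof -
  have fin: "finite V" using g by (simp add: graph_def)
  have EV: "\<forall>e\<in>E. e \<subseteq> V" using g unfolding graph_def by auto
  have finE: "finite E" using EV fin by (meson Pow_iff finite_Pow_iff finite_subset subsetI)
  have init: "rt_inv V E cV cE ({e \<in> E. 0 < cE e}, (\<lambda>_. 0))"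
    unfolding rt_inv_def feasible_def load_def using cV0 cE0 by force
  have "rt_inv V E cV cE (while (\<lambda>st. fst st \<noteq> {}) (rt_step V E cV cE) ({e \<in> E. 0 < cE e}, (\<lambda>_. 0)))
     \<and> fst (while (\<lambda>st. fst st \<noteq> {}) (rt_step V E cV cE) ({e \<in> E. 0 < cE e}, (\<lambda>_. 0))) = {}"
  proof (rule while_rule2[where r = "measure (\<lambda>st. card (fst st))"])
    show "rt_inv V E cV cE ({e \<in> E. 0 < cE e}, (\<lambda>_. 0))" by (rule init)
  next
    fix s assume s: "rt_inv V E cV cE s" "fst s \<noteq> {}"
    have fs: "finite (fst s)" using s finE unfolding rt_inv_def using finite_subset by blast
    from step_lemma[OF fin EV finE s] fs show
      "rt_inv V E cV cE (rt_step V E cV cE s) \<and> (rt_step V E cV cE s, s) \<in> measure (\<lambda>st. card (fst st))"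
      by (auto intro: psubset_card_mono)
  qed auto
  then show ?thesis unfolding rising_tide_def rt_inv_def by auto
qed

lemma one_side:
  fixes \<mu>1 \<mu>2 :: "nat set \<Rightarrow> real" and K \<xi> :: real
  assumes finE: "finite E" and EV: "\<forall>e\<in>E. e \<subseteq> V" and e: "e \<in> E"
    and A2E: "\<forall>f\<in>E. \<mu>2 f \<le> c2E f" and A2V: "\<forall>i\<in>V. load E \<mu>2 i \<le> c2V i"
    and B1: "\<mu>1 e = c1E e \<or> (\<exists>i\<in>e. load E \<mu>1 i = c1V i \<and> (\<forall>f\<in>E. i \<in> f \<longrightarrow> \<mu>1 f \<le> \<mu>1 e))"
    and capV: "\<forall>i\<in>V. c2V i \<le> c1V i + \<xi>" and capE: "\<forall>f\<in>E. c2E f \<le> c1E f + \<xi>"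
    and le: "\<mu>1 e \<le> \<mu>2 e"
    and IH: "\<forall>f\<in>E. min (\<mu>1 f) (\<mu>2 f) < \<mu>1 e \<longrightarrow> \<bar>\<mu>1 f - \<mu>2 f\<bar> \<le> K * \<xi>"
    and K0: "0 \<le> K" and xi0: "0 \<le> \<xi>"
  shows "\<mu>2 e - \<mu>1 e \<le> (1 + card E * K) * \<xi>"
proof -
  have KX: "0 \<le> card E * K * \<xi>" using K0 xi0 by simp
  from B1 show ?thesis
  proof
    assume "\<mu>1 e = c1E e"
    then show ?thesis using A2E capE e KX by (force simp: algebra_simps)
  next
    assume "\<exists>i\<in>e. load E \<mu>1 i = c1V i \<and> (\<forall>f\<in>E. i \<in> f \<longrightarrow> \<mu>1 f \<le> \<mu>1 e)"
    then obtain i where i: "i \<in> e" "load E \<mu>1 i = c1V i" and bd: "\<forall>f\<in>E. i \<in> f \<longrightarrow> \<mu>1 f \<le> \<mu>1 e"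
      by blast
    have iV: "i \<in> V" using i e EV by auto
    define S where "S = {f\<in>E. i \<in> f} - {e}"
    have finS: "finite S" unfolding S_def using finE by simp
    have cS: "card S \<le> card E" unfolding S_def using finE by (intro card_mono) auto
    have sumS: "load E \<mu> i = \<mu> e + sum \<mu> S" for \<mu> :: "nat set \<Rightarrow> real"
    proof -
      have "finite {f\<in>E. i \<in> f}" using finE by simp
      moreover have "e \<in> {f\<in>E. i \<in> f}" using e i by simp
      ultimately show ?thesis unfolding load_def S_def by (simp add: sum.remove)
    qed
    have pt: "\<mu>1 f - K * \<xi> \<le> \<mu>2 f" if f: "f \<in> S" for f
    proof (cases "min (\<mu>1 f) (\<mu>2 f) < \<mu>1 e")
      case True then show ?thesis using IH f unfolding S_def by force
    next
      case False
      have "\<mu>1 f \<le> \<mu>1 e" using bd f unfolding S_def by auto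
      have "0 \<le> K * \<xi>" using K0 xi0 by simp
      then show ?thesis using False \<open>\<mu>1 f \<le> \<mu>1 e\<close> by (auto simp: min_def split: if_splits)
    qed
    have "sum (\<lambda>f. \<mu>1 f - K * \<xi>) S \<le> sum \<mu>2 S" using pt by (rule sum_mono)
    then have s2: "sum \<mu>1 S - card S * (K * \<xi>) \<le> sum \<mu>2 S" by (simp add: sum_subtractf)
    have "card S * (K * \<xi>) \<le> card E * (K * \<xi>)" using cS K0 xi0
      by (intro mult_right_mono) auto
    moreover have "load E \<mu>2 i \<le> c1V i + \<xi>" using A2V capV iV by force
    ultimately show ?thesis using s2 sumS[of \<mu>1] sumS[of \<mu>2] i by (simp add: algebra_simps)
  qed
qed

lemma lipschitz:
  fixes \<mu>G \<mu>H :: "nat set \<Rightarrow> real" and \<xi> :: real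
  assumes finE: "finite E" and EV: "\<forall>e\<in>E. e \<subseteq> V"
    and AG: "feasible V E cVG cEG \<mu>G" and AH: "feasible V E cVH cEH \<mu>H"
    and BG: "\<forall>e\<in>E. \<mu>G e = cEG e \<or> (\<exists>i\<in>e. load E \<mu>G i = cVG i \<and> (\<forall>f\<in>E. i \<in> f \<longrightarrow> \<mu>G f \<le> \<mu>G e))"
    and BH: "\<forall>e\<in>E. \<mu>H e = cEH e \<or> (\<exists>i\<in>e. load E \<mu>H i = cVH i \<and> (\<forall>f\<in>E. i \<in> f \<longrightarrow> \<mu>H f \<le> \<mu>H e))"
    and cV: "\<forall>i\<in>V. \<bar>cVG i - cVH i\<bar> \<le> \<xi>" and cE: "\<forall>e\<in>E. \<bar>cEG e - cEH e\<bar> \<le> \<xi>"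
    and xi0: "0 \<le> \<xi>"
  shows "\<forall>e\<in>E. \<bar>\<mu>G e - \<mu>H e\<bar> \<le> (real (card E) + 1) ^ (card {f\<in>E. min (\<mu>G f) (\<mu>H f) < min (\<mu>G e) (\<mu>H e)} + 1) * \<xi>"
proof -
  define m where "m f = min (\<mu>G f) (\<mu>H f)" for f
  define B where "B = real (card E) + 1"
  have B1: "1 \<le> B" unfolding B_def by simp
  have main: "\<forall>e\<in>E. card {f\<in>E. m f < m e} = k \<longrightarrow> \<bar>\<mu>G e - \<mu>H e\<bar> \<le> B ^ (k + 1) * \<xi>" for k
  proof (induction k rule: less_induct)
    case (less k)
    show ?case
    proof (intro ballI impI)
      fix e assume e: "e \<in> E" and ke: "card {f\<in>E. m f < m e} = k"
      have Bk: "1 \<le> B ^ k" using B1 by simp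
      have IH: "\<forall>f\<in>E. m f < m e \<longrightarrow> \<bar>\<mu>G f - \<mu>H f\<bar> \<le> B ^ k * \<xi>"
      proof (intro ballI impI)
        fix f assume f: "f \<in> E" "m f < m e"
        have "{g\<in>E. m g < m f} \<subset> {g\<in>E. m g < m e}" using f by auto
        then have lt: "card {g\<in>E. m g < m f} < k" using ke finE by (metis (no_types, lifting) finite_subset psubset_card_mono subset_iff mem_Collect_eq)
        then have "\<bar>\<mu>G f - \<mu>H f\<bar> \<le> B ^ (card {g\<in>E. m g < m f} + 1) * \<xi>"
          using less f by blast
        also have "\<dots> \<le> B ^ k * \<xi>" using lt B1 xi0
          by (intro mult_right_mono power_increasing) auto
        finally show "\<bar>\<mu>G f - \<mu>H f\<bar> \<le> B ^ k * \<xi>" .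
      qed
      have Kb: "(1 + card E * B ^ k) * \<xi> \<le> B ^ (k + 1) * \<xi>"
      proof (rule mult_right_mono[OF _ xi0])
        have "1 + card E * B ^ k \<le> B ^ k + card E * B ^ k" using Bk by simp
        also have "\<dots> = B ^ (k + 1)" unfolding B_def by (simp add: algebra_simps)
        finally show "1 + card E * B ^ k \<le> B ^ (k + 1)" .
      qed
      have BK0: "0 \<le> B ^ k" using Bk by simp
      have fG: "\<forall>f\<in>E. \<mu>G f \<le> cEG f" "\<forall>i\<in>V. load E \<mu>G i \<le> cVG i"
        using AG unfolding feasible_def by auto
      have fH: "\<forall>f\<in>E. \<mu>H f \<le> cEH f" "\<forall>i\<in>V. load E \<mu>H i \<le> cVH i"
        using AH unfolding feasible_def by auto
      show "\<bar>\<mu>G e - \<mu>H e\<bar> \<le> B ^ (k + 1) * \<xi>"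
      proof (cases "\<mu>G e \<le> \<mu>H e")
        case True
        have me: "m e = \<mu>G e" using True unfolding m_def by simp
        have "\<mu>H e - \<mu>G e \<le> (1 + card E * B ^ k) * \<xi>"
          apply (rule one_side[OF finE EV e fH(1) fH(2), of "\<mu>G" cEG cVG])
          using BG e cV cE True IH me BK0 xi0 unfolding m_def by (auto simp: abs_le_iff)
        then show ?thesis using Kb True by simp
      next
        case False
        have me: "m e = \<mu>H e" using False unfolding m_def by simp
        have "\<mu>G e - \<mu>H e \<le> (1 + card E * B ^ k) * \<xi>"
          apply (rule one_side[OF finE EV e fG(1) fG(2), of "\<mu>H" cEH cVH])
          using BH e cV cE False IH me BK0 xi0 unfolding m_def by (auto simp: abs_le_iff min.commute abs_minus_commute)
        then show ?thesis using Kb False by simp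
      qed
    qed
  qed
  then show ?thesis unfolding m_def B_def by blast
qed

theorem lemma19:
  shows "\<exists>F :: nat \<Rightarrow> real. (\<forall>n. 0 \<le> F n) \<and>
    (\<forall>V E cVG cEG cVH cEH (\<xi>::real).
       graph V E \<longrightarrow>
       (\<forall>i\<in>V. 0 \<le> cVG i \<and> 0 \<le> cVH i) \<longrightarrow>
       (\<forall>e\<in>E. 0 \<le> cEG e \<and> 0 \<le> cEH e) \<longrightarrow>
       (\<forall>i\<in>V. \<bar>cVG i - cVH i\<bar> \<le> \<xi>) \<longrightarrow>
       (\<forall>e\<in>E. \<bar>cEG e - cEH e\<bar> \<le> \<xi>) \<longrightarrow>
       (\<forall>e\<in>E. \<bar>rising_tide V E cVG cEG e - rising_tide V E cVH cEH e\<bar> \<le> F (card V) * \<xi>))"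
proof (intro exI[of _ "\<lambda>n. (2 ^ n + 1) ^ (2 ^ n + 1) :: real"] conjI allI impI ballI)
  fix n :: nat show "0 \<le> ((2 ^ n + 1) ^ (2 ^ n + 1) :: real)" by simp
next
  fix V E cVG cEG cVH cEH e and \<xi> :: real
  assume g: "graph V E" and cv0: "\<forall>i\<in>V. 0 \<le> cVG i \<and> 0 \<le> cVH i"
    and ce0: "\<forall>e\<in>E. 0 \<le> cEG e \<and> 0 \<le> cEH e"
    and cV: "\<forall>i\<in>V. \<bar>cVG i - cVH i\<bar> \<le> \<xi>" and cE: "\<forall>e\<in>E. \<bar>cEG e - cEH e\<bar> \<le> \<xi>"
    and e: "e \<in> E"
  have fin: "finite V" using g by (simp add: graph_def)
  have EV: "\<forall>e\<in>E. e \<subseteq> V" using g unfolding graph_def by auto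
  have EP: "E \<subseteq> Pow V" using EV by auto
  have finE: "finite E" using EP fin by (meson finite_Pow_iff finite_subset)
  have xi0: "0 \<le> \<xi>" using cE e by (meson abs_ge_zero order_trans)
  have G: "feasible V E cVG cEG (rising_tide V E cVG cEG) \<and>
    (\<forall>e\<in>E. rising_tide V E cVG cEG e = cEG e \<or>
        (\<exists>i\<in>e. load E (rising_tide V E cVG cEG) i = cVG i \<and>
           (\<forall>f\<in>E. i \<in> f \<longrightarrow> rising_tide V E cVG cEG f \<le> rising_tide V E cVG cEG e)))"
    by (rule rt_props) (use g cv0 ce0 in auto)
  have H: "feasible V E cVH cEH (rising_tide V E cVH cEH) \<and>
    (\<forall>e\<in>E. rising_tide V E cVH cEH e = cEH e \<or>
        (\<exists>i\<in>e. load E (rising_tide V E cVH cEH) i = cVH i \<and>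
           (\<forall>f\<in>E. i \<in> f \<longrightarrow> rising_tide V E cVH cEH f \<le> rising_tide V E cVH cEH e)))"
    by (rule rt_props) (use g cv0 ce0 in auto)
  define k where "k = card {f\<in>E. min (rising_tide V E cVG cEG f) (rising_tide V E cVH cEH f)
      < min (rising_tide V E cVG cEG e) (rising_tide V E cVH cEH e)}"
  have L: "\<bar>rising_tide V E cVG cEG e - rising_tide V E cVH cEH e\<bar> \<le> (real (card E) + 1) ^ (k + 1) * \<xi>"
    using lipschitz[OF finE EV conjunct1[OF G] conjunct1[OF H] conjunct2[OF G] conjunct2[OF H] cV cE xi0] e
    unfolding k_def by blast
  have kE: "k \<le> card E" unfolding k_def using finE by (intro card_mono) auto
  have cE2: "card E \<le> 2 ^ card V" using card_mono[OF _ EP] fin by (simp add: card_Pow)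
  have "(real (card E) + 1) ^ (k + 1) \<le> (real (card E) + 1) ^ (card E + 1)"
    using kE by (intro power_increasing) auto
  also have "\<dots> \<le> (real (2 ^ card V) + 1) ^ (card E + 1)"
    using cE2 by (intro power_mono) auto
  also have "\<dots> \<le> (real (2 ^ card V) + 1) ^ (2 ^ card V + 1)"
    using cE2 by (intro power_increasing) auto
  finally have "(real (card E) + 1) ^ (k + 1) * \<xi> \<le> (2 ^ card V + 1) ^ (2 ^ card V + 1) * \<xi>"
    using xi0 by (intro mult_right_mono) auto
  then show "\<bar>rising_tide V E cVG cEG e - rising_tide V E cVH cEH e\<bar> \<le> (2 ^ card V + 1) ^ (2 ^ card V + 1) * \<xi>"
    using L by linarith
qed

end
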